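(* Let $n\in\mathbb{N}$, $i\in\{1,\ldots,n\}$ and $x\in\mathcal{X}^n$. Then \[ x_i \ge \frac{1}{(n-i+1)(s_i-1)}, \] with equality if and only if $x = \bar x(i)$.
   Context: The Sylvester sequence: $s_1 = 2$, $s_i = \prod_{j=1}^{i-1} s_j + 1$ for $i\ge2$. $\mathcal{X}^n$ is the set of $x\in\mathbb{R}^n$ with $x_1+\cdots+x_n = 1$, $1 \ge x_1 \ge \cdots \ge x_n \ge 0$, and $x_1\cdots x_j \le x_{j+1}+\cdots+x_n$ for all $j\in\{1,\ldots,n-1\}$. For $l\in\{1,\ldots,n\}$, $\bar x(l) := \big(\frac{1}{s_1},\ldots,\frac{1}{s_{l-1}}, \frac{1}{(n-l+1)(s_l-1)},\ldots,\frac{1}{(n-l+1)(s_l-1)}\big)\in\mathbb{R}^n$ (last value repeated $n-l+1$ times). *)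

theory Defs
  imports Complex_Main
begin

fun sylv_prod :: "nat \<Rightarrow> nat" where
  "sylv_prod 0 = 1"
| "sylv_prod (Suc k) = sylv_prod k * (sylv_prod k + 1)"

(* Sylvester sequence, 1-indexed: s_i = s_1 * ... * s_(i-1) + 1, so s_1 = 2 *)
definition sylvester :: "nat \<Rightarrow> nat" where
  "sylvester i = sylv_prod (i - 1) + 1"

lemma sylvester_1: "sylvester 1 = 2"
  by (simp add: sylvester_def)

lemma sylv_prod_eq: "sylv_prod k = (\<Prod>j\<in>{1..k}. sylvester j)"
proof (induction k)
  case (Suc k) then show ?case by (simp add: sylvester_def prod.nat_ivl_Suc')
qed simp

(* Vectors in R^n represented as x :: nat \<Rightarrow> real with coordinates x 1, ..., x n;
   values outside {1..n} are irrelevant (required to be 0 for uniqueness). *)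
definition Xset :: "nat \<Rightarrow> (nat \<Rightarrow> real) set" where
  "Xset n = {x. (\<forall>k. k \<notin> {1..n} \<longrightarrow> x k = 0)
     \<and> (\<Sum>k=1..n. x k) = 1
     \<and> (n \<ge> 1 \<longrightarrow> x 1 \<le> 1 \<and> x n \<ge> 0)
     \<and> (\<forall>k\<in>{1..<n}. x k \<ge> x (k+1))
     \<and> (\<forall>j\<in>{1..<n}. (\<Prod>k=1..j. x k) \<le> (\<Sum>k=j+1..n. x k))}"

definition xbar :: "nat \<Rightarrow> nat \<Rightarrow> (nat \<Rightarrow> real)" where
  "xbar n l = (\<lambda>k. if 1 \<le> k \<and> k < l then 1 / real (sylvester k)
                  else if l \<le> k \<and> k \<le> n then 1 / (real (n - l + 1) * (real (sylvester l) - 1))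
                  else 0)"

end

theory Submission imports Defs begin

definition TT :: "(nat \<Rightarrow> real) \<Rightarrow> nat \<Rightarrow> real" where "TT x k = (\<Sum>j=1..k. x j)"
definition PP :: "(nat \<Rightarrow> real) \<Rightarrow> nat \<Rightarrow> real" where "PP x k = (\<Prod>j=1..k. x j)"
definition QQ :: "nat \<Rightarrow> real" where "QQ k = real (sylv_prod k)"
definition feas :: "nat \<Rightarrow> (nat \<Rightarrow> real) \<Rightarrow> bool" where
  "feas N x \<longleftrightarrow> (\<forall>k\<in>{1..N}. 0 \<le> x k) \<and> (\<forall>k\<in>{1..<N}. x (Suc k) \<le> x k)
     \<and> (\<forall>k\<in>{1..N}. TT x k + PP x k \<le> 1)"

lemma TT_0[simp]: "TT x 0 = 0" by (simp add: TT_def)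
lemma TT_Suc[simp]: "TT x (Suc k) = TT x k + x (Suc k)" by (simp add: TT_def)
lemma PP_0[simp]: "PP x 0 = 1" by (simp add: PP_def)
lemma PP_Suc[simp]: "PP x (Suc k) = PP x k * x (Suc k)" by (simp add: PP_def)
lemma QQ_0[simp]: "QQ 0 = 1" by (simp add: QQ_def)
lemma QQ_Suc: "QQ (Suc k) = QQ k * (QQ k + 1)" by (simp add: QQ_def algebra_simps)
lemma sylv_prod_ge1: "sylv_prod k \<ge> 1" by (induction k) auto
lemma QQ_ge1: "QQ k \<ge> 1" using sylv_prod_ge1[of k] by (simp add: QQ_def)

lemma feas_mono: "feas N x \<Longrightarrow> M \<le> N \<Longrightarrow> feas M x"
  unfolding feas_def by auto

lemma feas_dec: assumes "feas N x" "1 \<le> j" "j \<le> k" "k \<le> N" shows "x k \<le> x j"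
  using assms(3,4)
proof (induction k)
  case 0 then show ?case by simp
next
  case (Suc k)
  show ?case
  proof (cases "j = Suc k")
    case False
    then have "j \<le> k" using Suc by auto
    then have "x k \<le> x j" using Suc by auto
    moreover have "x (Suc k) \<le> x k" using assms(1,2) Suc \<open>j \<le> k\<close> unfolding feas_def by auto
    ultimately show ?thesis by linarith
  qed simp
qed

lemma feas_le_half: assumes "feas N x" "1 \<le> k" "k \<le> N" shows "x k \<le> 1/2"
proof -
  have "TT x 1 + PP x 1 \<le> 1" using assms unfolding feas_def by (metis atLeastAtMost_iff le_trans order_refl)
  then have "x 1 \<le> 1/2" by simp
  then show ?thesis using feas_dec[OF assms(1) _ assms(2,3)] by (meson order_trans order_refl)
qed

lemma feas_nonneg: "feas N x \<Longrightarrow> 1 \<le> k \<Longrightarrow> k \<le> N \<Longrightarrow> 0 \<le> x k"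
  unfolding feas_def by auto

lemma PP_bounds: assumes "feas N x" "d \<le> N" shows "0 \<le> PP x d \<and> PP x d \<le> 1"
proof -
  have "\<forall>k\<in>{1..d}. 0 \<le> x k \<and> x k \<le> 1"
  proof
    fix k assume "k \<in> {1..d}"
    then have "1 \<le> k" "k \<le> N" using assms(2) by auto
    then show "0 \<le> x k \<and> x k \<le> 1"
      using feas_le_half[OF assms(1)] feas_nonneg[OF assms(1)] by fastforce
  qed
  then show ?thesis unfolding PP_def by (auto intro!: prod_nonneg prod_le_1)
qed

lemma feas_constr: "feas N x \<Longrightarrow> 1 \<le> k \<Longrightarrow> k \<le> N \<Longrightarrow> TT x k + PP x k \<le> 1"
  unfolding feas_def by auto

definition RR :: "nat \<Rightarrow> (nat \<Rightarrow> real) \<Rightarrow> bool" where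
  "RR N x \<longleftrightarrow> 1 - TT x N \<ge> 1 / QQ N"
definition JJ :: "nat \<Rightarrow> (nat \<Rightarrow> real) \<Rightarrow> bool" where
  "JJ N x \<longleftrightarrow> 1 - TT x N - 1 / QQ N \<ge> x N * (1 - QQ N * PP x N)
     \<and> (QQ N * PP x N < 1 \<longrightarrow> 1 - TT x N - 1 / QQ N > x N * (1 - QQ N * PP x N))"

lemma I_step:
  assumes IH: "N \<ge> 1 \<Longrightarrow> RR N x \<and> JJ N x" and f: "feas N x"
    and t0: "0 \<le> x (Suc N)" and tu: "N \<ge> 1 \<Longrightarrow> x (Suc N) \<le> x N"
  shows "1 - TT x (Suc N) \<ge> 1 / QQ N - QQ N * PP x (Suc N)"
proof (cases "N = 0")
  case True then show ?thesis by simp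
next
  case False
  then have N1: "N \<ge> 1" by simp
  have R: "1 - TT x N \<ge> 1 / QQ N" and J: "1 - TT x N - 1 / QQ N \<ge> x N * (1 - QQ N * PP x N)"
    using IH[OF N1] unfolding RR_def JJ_def by auto
  have tu': "x (Suc N) \<le> x N" using tu N1 by simp
  show ?thesis
  proof (cases "1 - QQ N * PP x N \<ge> 0")
    case True
    have "x (Suc N) * (1 - QQ N * PP x N) \<le> x N * (1 - QQ N * PP x N)"
      using True tu' by (simp add: mult_right_mono)
    then show ?thesis using J by (simp add: algebra_simps)
  next
    case False
    have "x (Suc N) \<le> x (Suc N) * (QQ N * PP x N)"
      using False t0 by (simp add: mult_le_cancel_left1)
    then show ?thesis using R by (simp add: algebra_simps)
  qed
qed

lemma R_from_I:
  assumes I: "1 - TT x (Suc N) \<ge> 1 / QQ N - QQ N * PP x (Suc N)"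
    and c: "TT x (Suc N) + PP x (Suc N) \<le> 1"
  shows "RR (Suc N) x"
proof -
  let ?r = "1 - TT x (Suc N)" and ?q = "QQ N"
  have q: "?q \<ge> 1" by (rule QQ_ge1)
  have "?r * (1 + ?q) \<ge> 1 / ?q" using I c q
    by (smt (verit) mult_left_mono distrib_left mult.commute mult_cancel_right1)
  then have "?r \<ge> 1 / ?q / (1 + ?q)" using q by (simp add: divide_le_eq mult.commute)
  then show ?thesis unfolding RR_def QQ_Suc using q by (simp add: field_simps)
qed

lemma JJ_alt: "JJ M z \<longleftrightarrow> (TT z M + z M * (1 - QQ M * PP z M) \<le> 1 - 1/QQ M)
   \<and> (QQ M * PP z M < 1 \<longrightarrow> TT z M + z M * (1 - QQ M * PP z M) < 1 - 1/QQ M)"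
  unfolding JJ_def by (auto simp: algebra_simps)

lemma pow_diff_strict:
  fixes t s :: real assumes "0 \<le> t" "t < s" "m \<ge> 1"
  shows "s^(m+1) - t^(m+1) < real (m+1) * s^m * (s - t)"
proof -
  have eq: "s^(m+1) - t^(m+1) = (s - t) * (\<Sum>i<m+1. t^(m+1 - Suc i) * s^i)"
    by (rule power_diff_sumr2)
  have "(\<Sum>i<m+1. t^(m+1 - Suc i) * s^i) < (\<Sum>i<m+1. s^m)"
  proof (rule sum_strict_mono_ex1)
    show "\<forall>i\<in>{..<m+1}. t^(m+1 - Suc i) * s^i \<le> s^m"
    proof
      fix i assume "i \<in> {..<m+1}"
      then have i: "i \<le> m" by auto
      have "t^(m - i) \<le> s^(m - i)" using assms by (intro power_mono) auto
      then have "t^(m+1 - Suc i) * s^i \<le> s^(m - i) * s^i"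
        using assms by (intro mult_right_mono) auto
      also have "\<dots> = s^m" using i by (simp add: power_add[symmetric])
      finally show "t^(m+1 - Suc i) * s^i \<le> s^m" .
    qed
    show "\<exists>i\<in>{..<m+1}. t^(m+1 - Suc i) * s^i < s^m"
      using assms by (intro bexI[of _ 0]) (auto intro: power_strict_mono)
  qed simp
  then have "(s - t) * (\<Sum>i<m+1. t^(m+1 - Suc i) * s^i) < (s - t) * (real (m+1) * s^m)"
    using assms by (intro mult_strict_left_mono) auto
  then show ?thesis using eq by (simp add: algebra_simps)
qed

lemma phi_mono:
  fixes Q B t s :: real
  assumes "0 \<le> t" "t < s" "m \<ge> 1" "0 \<le> Q * B" "Q * B * s^m \<le> 1"
  shows "real (m+1) * t - Q * B * t^(m+1) < real (m+1) * s - Q * B * s^(m+1)"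
proof (cases "Q * B = 0")
  case True
  have "real (m+1) * t < real (m+1) * s" using assms by (intro mult_strict_left_mono) auto
  moreover have "Q * B * t^(m+1) = 0" "Q * B * s^(m+1) = 0" using True by auto
  ultimately show ?thesis by (simp only:)
next
  case False
  then have QB: "Q * B > 0" using assms(4) by linarith
  have "Q * B * (s^(m+1) - t^(m+1)) < Q * B * (real (m+1) * s^m * (s - t))"
    using pow_diff_strict[OF assms(1,2,3)] QB by (intro mult_strict_left_mono) auto
  also have "\<dots> = real (m+1) * (s - t) * (Q * B * s^m)" by (simp add: algebra_simps)
  also have "\<dots> \<le> real (m+1) * (s - t) * 1"
    using assms by (intro mult_left_mono) auto
  finally show ?thesis by (simp add: algebra_simps)
qed

lemma block_TP:
  assumes "d \<le> M" "\<forall>k. d < k \<and> k \<le> M \<longrightarrow> y k = s"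
  shows "TT y M = TT y d + real (M - d) * s \<and> PP y M = PP y d * s^(M - d)"
  using assms
proof (induction M)
  case 0 then show ?case by simp
next
  case (Suc M)
  show ?case
  proof (cases "d = Suc M")
    case False
    then have "d \<le> M" using Suc by simp
    with Suc have IH: "TT y M = TT y d + real (M - d) * s \<and> PP y M = PP y d * s^(M - d)" by auto
    have "y (Suc M) = s" using Suc \<open>d \<le> M\<close> by auto
    moreover have "Suc M - d = Suc (M - d)" using \<open>d \<le> M\<close> by simp
    ultimately show ?thesis using IH by (simp add: algebra_simps)
  qed simp
qed

lemma dom_constr:
  fixes s B :: real
  assumes "0 \<le> s" "s \<le> 1" "0 \<le> B" "B \<le> 1" "1 \<le> j" "j \<le> m"
  shows "real j * s + B * s^j \<le> real m * s + B * s^m"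
proof (cases "j = m")
  case False
  then have jm: "real j + 1 \<le> real m" using assms by simp
  have "s^j \<le> s^1" using assms by (intro power_decreasing) auto
  then have sj: "s^j \<le> s" by simp
  have "B * s^j \<le> 1 * s^j" using assms by (intro mult_right_mono) auto
  then have "B * s^j \<le> s" using sj by linarith
  moreover have "0 \<le> B * s^m" using assms by simp
  moreover have "(real j + 1) * s \<le> real m * s" using jm assms(1) by (rule mult_right_mono)
  ultimately show ?thesis by (simp add: algebra_simps)
qed simp

lemma raise_feas:
  assumes f: "feas M x" "d < M" and s: "0 \<le> s" "d \<ge> 1 \<Longrightarrow> s \<le> x d" "s \<le> 1"
    and g: "TT x d + real (M-d) * s + PP x d * s^(M-d) \<le> 1"
  shows "feas M (\<lambda>k. if k \<le> d then x k else s)"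
proof -
  define y where "y = (\<lambda>k. if k \<le> d then x k else s)"
  have Ty: "TT y k = TT x k" "PP y k = PP x k" if "k \<le> d" for k
    using that unfolding TT_def PP_def y_def by (auto intro!: sum.cong prod.cong)
  have B: "0 \<le> PP x d" "PP x d \<le> 1" using PP_bounds[OF f(1)] f(2) by auto
  have "\<forall>k\<in>{1..M}. 0 \<le> y k"
  proof
    fix k assume "k \<in> {1..M}"
    then show "0 \<le> y k" using feas_nonneg[OF f(1), of k] s(1) unfolding y_def by auto
  qed
  moreover have "\<forall>k\<in>{1..<M}. y (Suc k) \<le> y k"
  proof
    fix k assume k: "k \<in> {1..<M}"
    show "y (Suc k) \<le> y k"
    proof (cases "Suc k \<le> d")
      case True
      then have "x (Suc k) \<le> x k" using f(1) k unfolding feas_def by auto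
      then show ?thesis using True unfolding y_def by auto
    next
      case False
      then show ?thesis using s k unfolding y_def by (cases "k = d") auto
    qed
  qed
  moreover have "\<forall>k\<in>{1..M}. TT y k + PP y k \<le> 1"
  proof
    fix k assume k: "k \<in> {1..M}"
    show "TT y k + PP y k \<le> 1"
    proof (cases "k \<le> d")
      case True then show ?thesis using Ty[OF True] feas_constr[OF f(1), of k] k by auto
    next
      case False
      have bl: "TT y k = TT y d + real (k - d) * s \<and> PP y k = PP y d * s^(k - d)"
        by (rule block_TP) (use False in \<open>auto simp: y_def\<close>)
      have "real (k-d) * s + PP x d * s^(k-d) \<le> real (M-d) * s + PP x d * s^(M-d)"
        using False k s B by (intro dom_constr) auto
      then show ?thesis using bl Ty[of d] g by simp
    qed
  qed
  ultimately show ?thesis unfolding feas_def y_def by blast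
qed



lemma J_block_step:
  assumes Rall: "\<And>y. feas M y \<Longrightarrow> RR M y"
    and dM: "d < M" and f: "feas M x" and blk: "\<forall>k. d < k \<and> k \<le> M \<longrightarrow> x k = x M"
    and IH: "\<And>z. d \<ge> 1 \<Longrightarrow> feas M z \<Longrightarrow> \<forall>k. d - 1 < k \<and> k \<le> M \<longrightarrow> z k = z M \<Longrightarrow> JJ M z"
  shows "JJ M x"
proof -
  define m where "m = M - d"
  define A where "A = TT x d"
  define B where "B = PP x d"
  define Q where "Q = QQ M"
  define t where "t = x M"
  define y where "y = (\<lambda>s k. if k \<le> d then x k else (s::real))"
  define \<phi> where "\<phi> = (\<lambda>s. A + real m * s + s * (1 - Q * (B * s^m)))"
  define g where "g = (\<lambda>s. A + real m * s + B * s^m)"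
  define u where "u = (if d = 0 then 1 else x d)"
  have m1: "m \<ge> 1" using dM by (simp add: m_def)
  have Q1: "Q \<ge> 1" unfolding Q_def by (rule QQ_ge1)
  have B01: "0 \<le> B" "B \<le> 1" using PP_bounds[OF f, of d] dM by (auto simp: B_def)
  have t0: "0 \<le> t" using feas_nonneg[OF f, of M] dM by (simp add: t_def)
  have tu: "t \<le> u"
  proof (cases "d = 0")
    case True then show ?thesis using feas_le_half[OF f, of M] dM by (simp add: t_def u_def)
  next
    case False then show ?thesis using feas_dec[OF f, of d M] dM by (simp add: t_def u_def)
  qed
  have u1: "u \<le> 1"
  proof (cases "d = 0")
    case False then show ?thesis using feas_le_half[OF f, of d] dM by (simp add: u_def)
  qed (simp add: u_def)
  have Tx: "TT x M = A + real m * t \<and> PP x M = B * t^m"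
  proof -
    have "TT x M = TT x d + real (M - d) * x M \<and> PP x M = PP x d * (x M)^(M - d)"
      by (rule block_TP[OF _ blk]) (use dM in simp)
    then show ?thesis by (simp only: A_def B_def m_def t_def)
  qed
  have Jx: "JJ M x \<longleftrightarrow> \<phi> t \<le> 1 - 1/Q \<and> (Q * (B * t^m) < 1 \<longrightarrow> \<phi> t < 1 - 1/Q)"
    unfolding JJ_alt using Tx by (simp add: \<phi>_def Q_def t_def)
  have yT: "TT (y s) M = A + real m * s \<and> PP (y s) M = B * s^m \<and> y s M = s" for s
  proof -
    have a: "TT (y s) d = A" "PP (y s) d = B"
      unfolding A_def B_def TT_def PP_def y_def by (auto intro!: sum.cong prod.cong)
    have "TT (y s) M = TT (y s) d + real (M - d) * s \<and> PP (y s) M = PP (y s) d * s^(M - d)"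
      by (rule block_TP) (use dM in \<open>auto simp: y_def\<close>)
    then show ?thesis using a dM by (simp add: m_def y_def)
  qed
  have Jy: "JJ M (y s) \<longleftrightarrow> \<phi> s \<le> 1 - 1/Q \<and> (Q * (B * s^m) < 1 \<longrightarrow> \<phi> s < 1 - 1/Q)" for s
    unfolding JJ_alt using yT[of s] by (simp add: \<phi>_def Q_def)
  have yfeas: "feas M (y s)" if "0 \<le> s" "s \<le> u" "g s \<le> 1" for s
    unfolding y_def
    by (rule raise_feas[OF f dM that(1)]) (use that u1 in \<open>auto simp: u_def g_def A_def B_def m_def\<close>)
  have key: "\<phi> s \<le> 1 - 1/Q" if "0 \<le> s" "s \<le> u" "g s \<le> 1" "1 \<le> Q * (B * s^m)" for s
  proof -
    have "RR M (y s)" using Rall[OF yfeas[OF that(1-3)]] .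
    then have "1 - (A + real m * s) \<ge> 1/Q" using yT[of s] by (simp add: RR_def Q_def)
    moreover have "s * (1 - Q * (B * s^m)) \<le> 0" using that by (simp add: mult_nonneg_nonpos)
    ultimately show ?thesis by (simp add: \<phi>_def)
  qed
  have gt: "g t \<le> 1" using feas_constr[OF f, of M] dM Tx by (simp add: g_def)
  have QB0: "0 \<le> Q * B" using Q1 B01 by simp
  have mono: "\<phi> s1 < \<phi> s2" if "0 \<le> s1" "s1 < s2" "Q * B * s2^m \<le> 1" for s1 s2
  proof -
    have "real (m+1) * s1 - Q * B * s1^(m+1) < real (m+1) * s2 - Q * B * s2^(m+1)"
      by (rule phi_mono[OF that(1,2) m1 QB0 that(3)])
    then show ?thesis by (simp add: \<phi>_def algebra_simps)
  qed
  show ?thesis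
  proof (cases "1 \<le> Q * (B * t^m)")
    case True
    then show ?thesis using Jx key[OF t0 tu gt True] by simp
  next
    case False
    define \<psi> where "\<psi> = (\<lambda>s. max (Q * B * s^m) (g s))"
    have psit: "\<psi> t \<le> 1" using False gt by (simp add: \<psi>_def mult.assoc)
    show ?thesis
    proof (cases "\<psi> u \<le> 1")
      case True
      have d1: "d \<ge> 1"
      proof (rule ccontr)
        assume "\<not> d \<ge> 1"
        then have "d = 0" by simp
        then have "g u = real m + 1" by (simp add: g_def u_def A_def B_def)
        then show False using True m1 by (simp add: \<psi>_def)
      qed
      have gu: "g u \<le> 1" "Q * B * u^m \<le> 1" using True by (auto simp: \<psi>_def)
      have fu: "feas M (y u)" using yfeas[OF _ order_refl gu(1)] t0 tu by simp
      have "\<forall>k. d - 1 < k \<and> k \<le> M \<longrightarrow> y u k = y u M"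
      proof (intro allI impI)
        fix k assume k: "d - 1 < k \<and> k \<le> M"
        then have "k = d \<or> d < k" using d1 by linarith
        then show "y u k = y u M" using k d1 dM by (auto simp: y_def u_def)
      qed
      then have "JJ M (y u)" by (rule IH[OF d1 fu])
      then have phu: "\<phi> u \<le> 1 - 1/Q" using Jy by simp
      show ?thesis
      proof (cases "t = u")
        case True
        have "\<forall>k. d - 1 < k \<and> k \<le> M \<longrightarrow> x k = x M"
        proof (intro allI impI)
          fix k assume "d - 1 < k \<and> k \<le> M"
          then have "k = d \<or> d < k" using d1 by linarith
          moreover have "x d = x M" using True d1 by (simp add: u_def t_def)
          moreover have "d < k \<Longrightarrow> x k = x M" using \<open>d - 1 < k \<and> k \<le> M\<close> by (intro blk[rule_format]) auto
          ultimately show "x k = x M" by auto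
        qed
        then show ?thesis by (rule IH[OF d1 f])
      next
        case False
        then have "t < u" using tu by simp
        then have "\<phi> t < \<phi> u" using mono[OF t0 _ gu(2)] by simp
        then show ?thesis using Jx phu by simp
      qed
    next
      case False
      have cont: "continuous_on {t..u} \<psi>"
        unfolding \<psi>_def g_def by (intro continuous_intros)
      obtain s where s: "t \<le> s" "s \<le> u" "\<psi> s = 1"
        using IVT'[of \<psi> t 1 u, OF psit _ tu cont] False by auto
      have s0: "0 \<le> s" using t0 s by simp
      have gs: "g s \<le> 1" "Q * B * s^m \<le> 1" using s(3) by (auto simp: \<psi>_def)
      have Rs: "1 - (A + real m * s) \<ge> 1/Q"
        using Rall[OF yfeas[OF s0 s(2) gs(1)]] yT[of s] by (simp add: RR_def Q_def)
      have big: "1 \<le> Q * (B * s^m)"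
      proof (cases "Q * B * s^m = 1")
        case True then show ?thesis by (simp add: mult.assoc)
      next
        case False
        then have "g s = 1" using s(3) gs by (auto simp: \<psi>_def max_def split: if_splits)
        then have "B * s^m \<ge> 1/Q" using Rs by (simp add: g_def)
        then have "Q * (B * s^m) \<ge> Q * (1/Q)" using Q1 by (intro mult_left_mono) auto
        then show ?thesis using Q1 by simp
      qed
      have ts: "t < s"
      proof (rule ccontr)
        assume "\<not> t < s"
        then have "s \<le> t" by simp
        then have "s^m \<le> t^m" using s0 by (intro power_mono) auto
        then have "Q * (B * s^m) \<le> Q * (B * t^m)" using QB0 B01 Q1
          by (intro mult_left_mono) auto
        then show False using big \<open>\<not> 1 \<le> Q * (B * t^m)\<close> by simp
      qed
      have "\<phi> t < \<phi> s" using mono[OF t0 ts gs(2)] .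
      moreover have "\<phi> s \<le> 1 - 1/Q" using key[OF s0 s(2) gs(1) big] .
      ultimately show ?thesis using Jx by simp
    qed
  qed
qed


lemma J_all:
  assumes Rall: "\<And>y. feas M y \<Longrightarrow> RR M y" and M1: "M \<ge> 1" and f: "feas M x"
  shows "JJ M x"
proof -
  have "\<forall>z. feas M z \<and> (\<forall>k. d < k \<and> k \<le> M \<longrightarrow> z k = z M) \<longrightarrow> JJ M z" if "d < M" for d
    using that
  proof (induction d)
    case 0
    show ?case
    proof (intro allI impI)
      fix z assume z: "feas M z \<and> (\<forall>k. 0 < k \<and> k \<le> M \<longrightarrow> z k = z M)"
      show "JJ M z"
      proof (rule J_block_step[OF Rall 0(1)])
        show "feas M z" using z by (rule conjunct1)
        show "\<forall>k. 0 < k \<and> k \<le> M \<longrightarrow> z k = z M" using z by (rule conjunct2)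
      next
        fix w assume "(1::nat) \<le> 0" then show "JJ M w" by simp
      qed
    qed
  next
    case (Suc d)
    have "d < M" using Suc.prems by simp
    note IH = Suc.IH[OF this]
    show ?case
    proof (intro allI impI)
      fix z assume z: "feas M z \<and> (\<forall>k. Suc d < k \<and> k \<le> M \<longrightarrow> z k = z M)"
      show "JJ M z"
      proof (rule J_block_step[OF Rall Suc(2)])
        show "feas M z" using z by (rule conjunct1)
        show "\<forall>k. Suc d < k \<and> k \<le> M \<longrightarrow> z k = z M" using z by (rule conjunct2)
        fix w assume w: "feas M w" "\<forall>k. Suc d - 1 < k \<and> k \<le> M \<longrightarrow> w k = w M"
        have "\<forall>k. d < k \<and> k \<le> M \<longrightarrow> w k = w M" using w(2) by (simp only: diff_Suc_1)
        then show "JJ M w" using IH[rule_format, OF conjI[OF w(1)]] by blast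
      qed
    qed
  qed
  moreover have "\<forall>k. M - 1 < k \<and> k \<le> M \<longrightarrow> x k = x M"
  proof (intro allI impI)
    fix k assume "M - 1 < k \<and> k \<le> M" then have "k = M" by linarith
    then show "x k = x M" by simp
  qed
  ultimately show ?thesis using M1 f by (meson diff_less zero_less_one less_le_trans)
qed

lemma main_ind: "\<forall>x. feas N x \<longrightarrow> RR N x \<and> (N \<ge> 1 \<longrightarrow> JJ N x)"
proof (induction N)
  case 0 then show ?case by (simp add: RR_def)
next
  case (Suc N)
  have R: "RR (Suc N) x" if f: "feas (Suc N) x" for x
  proof (rule R_from_I)
    have fN: "feas N x" using f by (rule feas_mono) simp
    show "1 - TT x (Suc N) \<ge> 1 / QQ N - QQ N * PP x (Suc N)"
    proof (rule I_step)
      show "N \<ge> 1 \<Longrightarrow> RR N x \<and> JJ N x" using Suc fN by blast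
      show "feas N x" by (rule fN)
      show "0 \<le> x (Suc N)" using feas_nonneg[OF f, of "Suc N"] by simp
      show "N \<ge> 1 \<Longrightarrow> x (Suc N) \<le> x N" using f unfolding feas_def by auto
    qed
    show "TT x (Suc N) + PP x (Suc N) \<le> 1" using feas_constr[OF f, of "Suc N"] by simp
  qed
  show ?case
  proof (intro allI impI conjI)
    fix x assume f: "feas (Suc N) x"
    show "RR (Suc N) x" by (rule R[OF f])
    show "JJ (Suc N) x" if "Suc N \<ge> 1" by (rule J_all[OF R _ f]) simp_all
  qed
qed


lemma E_ind: "\<forall>x. feas N x \<and> 1 - TT x N = 1 / QQ N \<longrightarrow> (\<forall>k\<in>{1..N}. x k = 1 / (QQ (k - 1) + 1))"
proof (induction N)
  case 0 then show ?case by simp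
next
  case (Suc N)
  show ?case
  proof (intro allI impI)
    fix x assume a: "feas (Suc N) x \<and> 1 - TT x (Suc N) = 1 / QQ (Suc N)"
    have f: "feas (Suc N) x" and req: "1 - TT x (Suc N) = 1 / QQ (Suc N)" using a by auto
    have fN: "feas N x" using f by (rule feas_mono) simp
    define Q where "Q = QQ N"
    have Q1: "Q \<ge> 1" unfolding Q_def by (rule QQ_ge1)
    have RJ: "N \<ge> 1 \<Longrightarrow> RR N x \<and> JJ N x" using main_ind[of N] fN by blast
    have t0: "0 \<le> x (Suc N)" using feas_nonneg[OF f, of "Suc N"] by simp
    have tu: "N \<ge> 1 \<Longrightarrow> x (Suc N) \<le> x N" using f unfolding feas_def by auto
    have I: "1 - TT x (Suc N) \<ge> 1 / Q - Q * PP x (Suc N)"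
      unfolding Q_def by (rule I_step[OF RJ fN t0 tu])
    have c: "TT x (Suc N) + PP x (Suc N) \<le> 1" using feas_constr[OF f, of "Suc N"] by simp
    have r: "1 - TT x (Suc N) = 1 / (Q * (Q + 1))" using req by (simp add: QQ_Suc Q_def)
    have Qn: "Q \<noteq> 0" "Q + 1 \<noteq> 0" "Q * (Q + 1) \<noteq> 0" using Q1 by auto
    have e1: "1 / Q - 1 / (Q * (Q + 1)) = Q * (1 / (Q * (Q + 1)))"
      using Qn by (simp add: divide_simps)
    have "Q * PP x (Suc N) \<ge> Q * (1 / (Q * (Q + 1)))" using I r e1 by linarith
    then have "PP x (Suc N) \<ge> 1 / (Q * (Q + 1))"
      using Q1 mult_le_cancel_left_pos[of Q "1 / (Q * (Q + 1))" "PP x (Suc N)"] by linarith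
    then have P': "PP x (Suc N) = 1 / (Q * (Q + 1))" using c r by linarith
    have Ppos: "PP x (Suc N) > 0" using P' Q1 by simp
    show "\<forall>k\<in>{1..Suc N}. x k = 1 / (QQ (k - 1) + 1)"
    proof (cases "N = 0")
      case True
      then show ?thesis using P' by (simp add: Q_def)
    next
      case False
      then have N1: "N \<ge> 1" by simp
      define p where "p = PP x N"
      define t where "t = x (Suc N)"
      define r0 where "r0 = 1 - TT x N"
      have Pt: "PP x (Suc N) = p * t" by (simp add: p_def t_def)
      have p0: "0 \<le> p" using PP_bounds[OF fN, of N] by (simp add: p_def)
      have tpos: "t > 0" using Ppos Pt p0 t0 t_def by (metis mult_zero_right order_le_less)
      have rr: "1 - TT x (Suc N) = r0 - t" by (simp add: r0_def t_def)
      have R0: "r0 \<ge> 1 / Q" using RJ[OF N1] by (simp add: RR_def r0_def Q_def)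
      have J0: "r0 - 1/Q \<ge> x N * (1 - Q * p)" and J0s: "Q * p < 1 \<Longrightarrow> r0 - 1/Q > x N * (1 - Q * p)"
        using RJ[OF N1] by (auto simp: JJ_def r0_def Q_def p_def)
      have target: "r0 - t = 1/Q - Q * (p * t)"
        using r rr P' Pt e1 by (simp add: algebra_simps)
      have Qp: "Q * p = 1"
      proof (rule ccontr)
        assume ne: "Q * p \<noteq> 1"
        show False
        proof (cases "Q * p < 1")
          case True
          have "x N * (1 - Q * p) \<ge> t * (1 - Q * p)"
            using True tu[OF N1] by (intro mult_right_mono) (auto simp: t_def)
          then have "r0 - t > 1/Q - Q * (p * t)" using J0s[OF True] by (simp add: algebra_simps)
          then show False using target by simp
        next
          case False
          then have "Q * p > 1" using ne by simp
          then have "t < t * (Q * p)" using tpos by simp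
          then have "r0 - t > 1/Q - Q * (p * t)" using R0 by (simp add: algebra_simps)
          then show False using target by simp
        qed
      qed
      have pQ: "p = 1 / Q" using Qp Q1 by (simp add: field_simps)
      have tv: "t = 1 / (Q + 1)"
      proof -
        have "p * t = 1 / (Q * (Q + 1))" using P' Pt by simp
        then have "t / Q = 1 / (Q * (Q + 1))" using pQ by simp
        then show ?thesis using Qn by (simp add: divide_simps)
      qed
      have "(r0 * (Q + 1) - 1) * Q = 1" using target pQ tv Qn by (simp add: divide_simps)
      then have "(r0 * Q - 1) * (Q + 1) = 0" by algebra
      then have "r0 * Q = 1" using Qn by simp
      then have "r0 = 1 / Q" using Qn by (simp add: divide_simps)
      then have "\<forall>k\<in>{1..N}. x k = 1 / (QQ (k - 1) + 1)"
        using Suc.IH fN by (simp add: r0_def Q_def)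
      then show ?thesis using tv by (auto simp: t_def Q_def le_Suc_eq)
    qed
  qed
qed


lemma chain_dec:
  fixes j k n :: nat
  assumes "\<forall>k\<in>{1..<n}. x k \<ge> x (k+1)" "1 \<le> j" "j \<le> k" "k \<le> n"
  shows "x k \<le> (x j :: real)"
  using assms(3,4)
proof (induction k)
  case 0 then show ?case by simp
next
  case (Suc k)
  show ?case
  proof (cases "j = Suc k")
    case False
    then have "j \<le> k" using Suc by auto
    then have "x k \<le> x j" using Suc by auto
    moreover have "x (Suc k) \<le> x k" using assms(1,2) Suc \<open>j \<le> k\<close> by auto
    ultimately show ?thesis by linarith
  qed simp
qed

lemma sum_split1: "(k::nat) \<le> n \<Longrightarrow> (\<Sum>j=1..n. x j) = (\<Sum>j=1..k. x j) + (\<Sum>j=k+1..n. (x j :: real))"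
  using sum.ub_add_nat[of 1 k x "n - k"] by simp

theorem mainTheorem15:
  fixes n i :: nat and x :: "nat \<Rightarrow> real"
  assumes "i \<in> {1..n}" and "x \<in> Xset n"
  shows "x i \<ge> 1 / (real (n - i + 1) * (real (sylvester i) - 1))
    \<and> (x i = 1 / (real (n - i + 1) * (real (sylvester i) - 1)) \<longleftrightarrow> x = xbar n i)"
proof -
  have i1: "1 \<le> i" and iN: "i \<le> n" using assms(1) by auto
  have out: "\<And>k. k \<notin> {1..n} \<Longrightarrow> x k = 0" and sum1: "(\<Sum>k=1..n. x k) = 1"
    and xn0: "x n \<ge> 0" and dec: "\<forall>k\<in>{1..<n}. x k \<ge> x (k+1)"
    and pc: "\<forall>j\<in>{1..<n}. (\<Prod>k=1..j. x k) \<le> (\<Sum>k=j+1..n. x k)"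
    using assms(2) iN i1 unfolding Xset_def by auto
  define N where "N = i - 1"
  have NN: "N < n" using i1 iN by (simp add: N_def)
  have nonneg: "0 \<le> x k" if "1 \<le> k" "k \<le> n" for k
    using chain_dec[OF dec that] xn0 by linarith
  have tail: "1 - TT x k = (\<Sum>j=k+1..n. x j)" if "k \<le> n" for k
    using sum_split1[OF that, of x] sum1 by (simp add: TT_def)
  have f: "feas N x"
    unfolding feas_def
  proof (intro conjI ballI)
    fix k assume "k \<in> {1..N}" then show "0 \<le> x k" using NN nonneg by auto
  next
    fix k assume "k \<in> {1..<N}" then show "x (Suc k) \<le> x k" using NN dec by auto
  next
    fix k assume k: "k \<in> {1..N}"
    then have "PP x k \<le> 1 - TT x k" using pc NN tail[of k] by (auto simp: PP_def)
    then show "TT x k + PP x k \<le> 1" by simp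
  qed
  have R: "1 - TT x N \<ge> 1 / QQ N" using main_ind[of N] f by (simp add: RR_def)
  define S where "S = (\<Sum>j=i..n. x j)"
  have S: "S = 1 - TT x N" using tail[of N] NN i1 by (simp add: S_def N_def)
  have card: "real (n - i + 1) = real (card {i..n})" using iN by simp
  have Sle: "S \<le> real (n - i + 1) * x i"
  proof -
    have "S \<le> (\<Sum>j=i..n. x i)" unfolding S_def
      using chain_dec[OF dec i1] by (intro sum_mono) auto
    also have "\<dots> = real (n - i + 1) * x i" using card by simp
    finally show ?thesis .
  qed
  have sylv: "real (sylvester i) - 1 = QQ N" by (simp add: sylvester_def QQ_def N_def)
  have Q1: "QQ N \<ge> 1" by (rule QQ_ge1)
  have cpos: "real (n - i + 1) > 0" using iN by simp
  define b where "b = 1 / (real (n - i + 1) * QQ N)"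
  have bS: "real (n - i + 1) * b = 1 / QQ N" using cpos by (simp add: b_def)
  have ineq: "x i \<ge> b"
  proof -
    have "real (n - i + 1) * b \<le> real (n - i + 1) * x i" using bS R S Sle by linarith
    then show ?thesis using cpos by simp
  qed
  have eqv: "x i = b \<longleftrightarrow> x = xbar n i"
  proof
    assume xb: "x i = b"
    have cx: "real (n - i + 1) * x i = 1 / QQ N" using xb bS by simp
    have Seq: "S = real (n - i + 1) * x i" using cx R S Sle by linarith
    have req: "1 - TT x N = 1 / QQ N" using cx R S Sle by linarith
    have eqtail: "x k = x i" if "i \<le> k" "k \<le> n" for k
    proof -
      have "(\<Sum>j=i..n. x i - x j) = real (n - i + 1) * x i - S"
        unfolding S_def using card by (simp add: sum_subtractf)
      then have z: "(\<Sum>j=i..n. x i - x j) = 0" using Seq by simp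
      have "\<forall>j\<in>{i..n}. x i - x j = 0"
        using z chain_dec[OF dec i1] by (subst (asm) sum_nonneg_eq_0_iff) auto
      then show ?thesis using that by auto
    qed
    have pre: "\<forall>k\<in>{1..N}. x k = 1 / (QQ (k - 1) + 1)"
      using E_ind[of N] f req by blast
    show "x = xbar n i"
    proof
      fix k
      show "x k = xbar n i k"
      proof (cases "1 \<le> k \<and> k < i")
        case True
        then have "k \<in> {1..N}" by (auto simp: N_def)
        then have "x k = 1 / (QQ (k - 1) + 1)" using pre by auto
        then show ?thesis using True by (simp add: xbar_def sylvester_def QQ_def)
      next
        case False
        show ?thesis
        proof (cases "i \<le> k \<and> k \<le> n")
          case True
          then have "x k = b" using eqtail xb by auto
          then show ?thesis using True False by (simp add: xbar_def b_def sylv)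
        next
          case False2: False
          then have "k \<notin> {1..n}" using False i1 by auto
          then show ?thesis using out False False2 by (auto simp: xbar_def)
        qed
      qed
    qed
  next
    assume "x = xbar n i"
    then show "x i = b" using i1 iN by (simp add: xbar_def b_def sylv)
  qed
  show ?thesis using ineq eqv by (simp add: b_def sylv)
qed

end
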